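(* Let the labels $\{1,\dots,k\}$ be partitioned into $b\ge2$ blocks of sizes $s_1,\dots,s_b$, let $L_{01,b}(i,j)=[i\text{ and }j\text{ are not in the same block}]$ with quadratic surrogate $\Phi_{quad}(f,y)=\frac1{2k}\|f+L_{01,b}(:,y)\|_2^2$, and let the scores be constrained to the subspace $\mathcal{F}_{01,b}=\mathrm{span}(L_{01,b})$ (the score vectors constant on each block). Then $$H_{\Phi_{quad},L_{01,b},\mathcal{F}_{01,b}}(\varepsilon)=\frac{\varepsilon^2}{4k}\min_{v\ne u}\frac{2s_vs_u}{s_v+s_u},\qquad0\le\varepsilon\le1.$$ In particular, if all blocks have the same size, $H_{\Phi_{quad},L_{01,b},\mathcal{F}_{01,b}}(\varepsilon)=\frac{\varepsilon^2}{4b}$.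
   Context: $\mathrm{span}(L)$ is the column space. $\mathrm{pred}(f)$ is the smallest index maximizing $f_c$. For $q\in\Delta_k$: $\ell(f,q)=\sum_cq_cL(\mathrm{pred}(f),c)$, $\phi(f,q)=\sum_cq_c\Phi(f,c)$, $\delta\ell(f,q)=\ell(f,q)-\inf_{\hat f\in\mathcal{F}}\ell(\hat f,q)$, $\delta\phi(f,q)=\phi(f,q)-\inf_{\hat f\in\mathcal{F}}\phi(\hat f,q)$; calibration function $H_{\Phi,L,\mathcal{F}}(\varepsilon)=\inf\{\delta\phi(f,q):f\in\mathcal{F},q\in\Delta_k,\delta\ell(f,q)\ge\varepsilon\}$ ($+\infty$ if empty). *)

theory Defs
  imports Complex_Main "HOL-Library.Extended_Real"
begin

text \<open>Labels are 0,...,k-1 (0-based). Score vectors are functions nat => real;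
  only the values at indices < k matter.\<close>

definition simplex :: "nat \<Rightarrow> (nat \<Rightarrow> real) set" where
  "simplex k = {q. (\<forall>c<k. q c \<ge> 0) \<and> (\<Sum>c<k. q c) = 1}"

definition pred :: "nat \<Rightarrow> (nat \<Rightarrow> real) \<Rightarrow> nat" where
  "pred k f = (LEAST c. c < k \<and> (\<forall>c'<k. f c' \<le> f c))"

definition cond_loss :: "nat \<Rightarrow> (nat \<Rightarrow> nat \<Rightarrow> real) \<Rightarrow> (nat \<Rightarrow> real) \<Rightarrow> (nat \<Rightarrow> real) \<Rightarrow> real" where
  "cond_loss k L f q = (\<Sum>c<k. q c * L (pred k f) c)"

definition cond_surr :: "nat \<Rightarrow> ((nat \<Rightarrow> real) \<Rightarrow> nat \<Rightarrow> real) \<Rightarrow> (nat \<Rightarrow> real) \<Rightarrow> (nat \<Rightarrow> real) \<Rightarrow> real" where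
  "cond_surr k Phi f q = (\<Sum>c<k. q c * Phi f c)"

definition excess_loss where
  "excess_loss k L F f q = cond_loss k L f q - (INF g\<in>F. cond_loss k L g q)"

definition excess_surr where
  "excess_surr k Phi F f q = cond_surr k Phi f q - (INF g\<in>F. cond_surr k Phi g q)"

text \<open>Calibration function; the infimum of the empty set in ereal is +infinity.\<close>
definition calib :: "nat \<Rightarrow> ((nat \<Rightarrow> real) \<Rightarrow> nat \<Rightarrow> real) \<Rightarrow> (nat \<Rightarrow> nat \<Rightarrow> real)
    \<Rightarrow> (nat \<Rightarrow> real) set \<Rightarrow> real \<Rightarrow> ereal" where
  "calib k Phi L F \<epsilon> = (INF p \<in> {(f, q). f \<in> F \<and> q \<in> simplex k \<and> excess_loss k L F f q \<ge> \<epsilon>}.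
       ereal (excess_surr k Phi F (fst p) (snd p)))"

definition col_span :: "nat \<Rightarrow> (nat \<Rightarrow> nat \<Rightarrow> real) \<Rightarrow> (nat \<Rightarrow> real) set" where
  "col_span k L = {f. \<exists>\<alpha>. f = (\<lambda>i. if i < k then (\<Sum>j<k. \<alpha> j * L i j) else 0)}"

text \<open>Block 0-1 loss: blk maps each label to its block.\<close>
definition L01b :: "(nat \<Rightarrow> nat) \<Rightarrow> nat \<Rightarrow> nat \<Rightarrow> real" where
  "L01b blk i j = (if blk i = blk j then 0 else 1)"

definition Phi_quad :: "nat \<Rightarrow> (nat \<Rightarrow> nat \<Rightarrow> real) \<Rightarrow> (nat \<Rightarrow> real) \<Rightarrow> nat \<Rightarrow> real" where
  "Phi_quad k L f y = 1 / (2 * real k) * (\<Sum>i<k. (f i + L i y)\<^sup>2)"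

definition block_size :: "nat \<Rightarrow> (nat \<Rightarrow> nat) \<Rightarrow> nat \<Rightarrow> nat" where
  "block_size k blk v = card {i. i < k \<and> blk i = v}"

end

theory Submission
  imports Defs
begin

definition Qb :: "nat \<Rightarrow> (nat\<Rightarrow>nat) \<Rightarrow> (nat\<Rightarrow>real) \<Rightarrow> nat \<Rightarrow> real" where
  "Qb k blk q u = (\<Sum>c<k. if blk c = u then q c else 0)"

lemma pred_props:
  assumes "k > 0"
  shows "pred k f < k \<and> (\<forall>c'<k. f c' \<le> f (pred k f))"
proof -
  have fin: "finite (f ` {..<k})" "f ` {..<k} \<noteq> {}" using assms by auto
  obtain c where c: "c < k" "f c = Max (f ` {..<k})"
    using Max_in[OF fin] by auto
  have "c < k \<and> (\<forall>c'<k. f c' \<le> f c)" using c fin by auto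
  then show ?thesis unfolding pred_def by (rule LeastI)
qed

lemma loss_formula:
  assumes "q \<in> simplex k" "p < k"
  shows "(\<Sum>c<k. q c * L01b blk p c) = 1 - Qb k blk q (blk p)"
proof -
  have "(\<Sum>c<k. q c * L01b blk p c) = (\<Sum>c<k. q c - (if blk c = blk p then q c else 0))"
    by (rule sum.cong) (auto simp: L01b_def)
  also have "\<dots> = 1 - Qb k blk q (blk p)"
    using assms(1) by (simp add: sum_subtractf simplex_def Qb_def)
  finally show ?thesis .
qed

lemma cond_loss_formula:
  assumes "q \<in> simplex k" "k > 0"
  shows "cond_loss k (L01b blk) f q = 1 - Qb k blk q (blk (pred k f))"
  using loss_formula[OF assms(1)] pred_props[OF assms(2)] unfolding cond_loss_def by blast

lemma surr_pointwise:
  assumes "q \<in> simplex k"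
  shows "(\<Sum>c<k. q c * (x + L01b blk i c)\<^sup>2)
     = (x + 1 - Qb k blk q (blk i))\<^sup>2 + Qb k blk q (blk i) - (Qb k blk q (blk i))\<^sup>2"
proof -
  define P where "P = Qb k blk q (blk i)"
  have "(\<Sum>c<k. q c * (x + L01b blk i c)\<^sup>2)
      = (\<Sum>c<k. q c * (x+1)\<^sup>2 - (if blk c = blk i then q c else 0) * (2*x+1))"
    by (rule sum.cong) (auto simp: L01b_def power2_eq_square algebra_simps)
  also have "\<dots> = (\<Sum>c<k. q c) * (x+1)\<^sup>2 - P * (2*x+1)"
    by (simp add: sum_subtractf sum_distrib_right P_def Qb_def)
  also have "\<dots> = (x+1)\<^sup>2 - P * (2*x+1)" using assms by (simp add: simplex_def)
  also have "\<dots> = (x + 1 - P)\<^sup>2 + P - P\<^sup>2" by (simp add: power2_eq_square algebra_simps)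
  finally show ?thesis by (simp add: P_def)
qed

lemma surr_formula:
  assumes "q \<in> simplex k"
  shows "cond_surr k (Phi_quad k (L01b blk)) f q = (1/(2*real k)) *
     (\<Sum>i<k. (f i + 1 - Qb k blk q (blk i))\<^sup>2 + Qb k blk q (blk i) - (Qb k blk q (blk i))\<^sup>2)"
proof -
  have "cond_surr k (Phi_quad k (L01b blk)) f q
     = (1/(2*real k)) * (\<Sum>c<k. \<Sum>i<k. q c * (f i + L01b blk i c)\<^sup>2)"
    unfolding cond_surr_def Phi_quad_def by (simp add: sum_distrib_left sum_distrib_right mult_ac)
  also have "(\<Sum>c<k. \<Sum>i<k. q c * (f i + L01b blk i c)\<^sup>2) = (\<Sum>i<k. \<Sum>c<k. q c * (f i + L01b blk i c)\<^sup>2)"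
    by (rule sum.swap)
  also have "\<dots> = (\<Sum>i<k. (f i + 1 - Qb k blk q (blk i))\<^sup>2 + Qb k blk q (blk i) - (Qb k blk q (blk i))\<^sup>2)"
    by (rule sum.cong[OF refl], rule surr_pointwise[OF assms])
  finally show ?thesis .
qed

lemma col_span_const:
  assumes "f \<in> col_span k (L01b blk)" "i < k" "j < k" "blk i = blk j"
  shows "f i = f j"
  using assms unfolding col_span_def L01b_def by auto

lemma block_size_pos:
  assumes "\<forall>v<b. \<exists>i<k. blk i = v" "u < b"
  shows "block_size k blk u > 0"
proof -
  have "finite {i. i < k \<and> blk i = u}" by simp
  moreover have "{i. i < k \<and> blk i = u} \<noteq> {}" using assms by auto
  ultimately show ?thesis unfolding block_size_def by (simp add: card_gt_0_iff)
qed

lemma col_span_block: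
  assumes "b \<ge> 2" "\<forall>i<k. blk i < b" "\<forall>v<b. \<exists>i<k. blk i = v"
  shows "(\<lambda>i. if i<k then G (blk i) else 0) \<in> col_span k (L01b blk)"
proof -
  define s where "s u = real (block_size k blk u)" for u
  define T where "T = (\<Sum>v<b. G v)"
  define \<beta> where "\<beta> u = T / (real b - 1) - G u" for u
  define \<alpha> where "\<alpha> j = \<beta> (blk j) / s (blk j)" for j
  have B: "(\<Sum>v<b. \<beta> v) = T / (real b - 1)"
  proof -
    have "(\<Sum>v<b. \<beta> v) = real b * (T / (real b - 1)) - T"
      by (simp add: \<beta>_def sum_subtractf T_def)
    also have "\<dots> = T / (real b - 1)" using assms(1) by (simp add: field_simps)
    finally show ?thesis .
  qed
  have key: "(\<Sum>j<k. \<alpha> j * L01b blk i j) = G (blk i)" if "i < k" for i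
  proof -
    have "(\<Sum>j<k. \<alpha> j * L01b blk i j) = (\<Sum>v<b. \<Sum>j\<in>{x. x \<in> {..<k} \<and> blk x = v}. \<alpha> j * L01b blk i j)"
      by (rule sum.group[symmetric]) (use assms(2) in auto)
    also have "\<dots> = (\<Sum>v<b. if blk i = v then 0 else \<beta> v)"
    proof (rule sum.cong[OF refl])
      fix v assume v: "v \<in> {..<b}"
      have "(\<Sum>j\<in>{x. x \<in> {..<k} \<and> blk x = v}. \<alpha> j * L01b blk i j)
          = (\<Sum>j\<in>{x. x \<in> {..<k} \<and> blk x = v}. \<beta> v / s v * (if blk i = v then 0 else 1))"
        by (rule sum.cong) (auto simp: \<alpha>_def L01b_def)
      also have "\<dots> = s v * (\<beta> v / s v * (if blk i = v then 0 else 1))"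
        by (simp add: s_def block_size_def)
      also have "\<dots> = (if blk i = v then 0 else \<beta> v)"
        using block_size_pos[OF assms(3)] v by (simp add: s_def)
      finally show "(\<Sum>j\<in>{x. x \<in> {..<k} \<and> blk x = v}. \<alpha> j * L01b blk i j) = (if blk i = v then 0 else \<beta> v)" .
    qed
    also have "\<dots> = (\<Sum>v<b. \<beta> v) - \<beta> (blk i)"
    proof -
      have "(\<Sum>v<b. \<beta> v) = (\<Sum>v<b. if blk i = v then 0 else \<beta> v) + (\<Sum>v<b. if blk i = v then \<beta> v else 0)"
        by (subst sum.distrib[symmetric]) (rule sum.cong, auto)
      moreover have "(\<Sum>v<b. if blk i = v then \<beta> v else 0) = \<beta> (blk i)"
        using assms(2) that by (simp add: sum.delta)
      ultimately show ?thesis by simp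
    qed
    also have "\<dots> = G (blk i)" using B by (simp add: \<beta>_def)
    finally show ?thesis .
  qed
  show ?thesis unfolding col_span_def
    by (rule CollectI, rule exI[of _ \<alpha>]) (auto simp: key)
qed


lemma excess_surr_formula:
  assumes "b \<ge> 2" "\<forall>i<k. blk i < b" "\<forall>v<b. \<exists>i<k. blk i = v" "q \<in> simplex k"
  shows "excess_surr k (Phi_quad k (L01b blk)) (col_span k (L01b blk)) f q
       = (1/(2*real k)) * (\<Sum>i<k. (f i + 1 - Qb k blk q (blk i))\<^sup>2)"
proof -
  define F where "F = col_span k (L01b blk)"
  define P where "P i = Qb k blk q (blk i)" for i
  define C where "C = (1/(2*real k)) * (\<Sum>i<k. P i - (P i)\<^sup>2)"
  have cs: "cond_surr k (Phi_quad k (L01b blk)) g q = (1/(2*real k)) * (\<Sum>i<k. (g i + 1 - P i)\<^sup>2) + C" for g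
    unfolding surr_formula[OF assms(4)] C_def P_def
    by (simp add: sum.distrib algebra_simps sum_subtractf)
  have ge: "cond_surr k (Phi_quad k (L01b blk)) g q \<ge> C" for g
    unfolding cs by (auto intro!: divide_nonneg_nonneg sum_nonneg)
  define fs where "fs = (\<lambda>i. if i<k then (\<lambda>u. Qb k blk q u - 1) (blk i) else 0)"
  have fsF: "fs \<in> F" unfolding fs_def F_def by (rule col_span_block[OF assms(1-3)])
  have fsv: "cond_surr k (Phi_quad k (L01b blk)) fs q = C"
    unfolding cs by (simp add: fs_def P_def)
  have "(INF g\<in>F. cond_surr k (Phi_quad k (L01b blk)) g q) = C"
  proof (rule antisym)
    show "(INF g\<in>F. cond_surr k (Phi_quad k (L01b blk)) g q) \<le> C"
      using cINF_lower[of "\<lambda>g. cond_surr k (Phi_quad k (L01b blk)) g q" F fs] fsF fsv ge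
      by (auto simp: bdd_below_def)
    show "C \<le> (INF g\<in>F. cond_surr k (Phi_quad k (L01b blk)) g q)"
      using fsF ge by (intro cINF_greatest) auto
  qed
  then show ?thesis unfolding excess_surr_def F_def[symmetric] cs P_def by simp
qed

lemma excess_loss_lower:
  assumes "\<forall>i<k. blk i < b" "q \<in> simplex k" "k > 0" "F \<noteq> {}"
    and "excess_loss k (L01b blk) F f q \<ge> \<epsilon>"
  shows "\<exists>v<b. Qb k blk q v - Qb k blk q (blk (pred k f)) \<ge> \<epsilon>"
proof -
  have b0: "b > 0" using assms(1,3) by auto
  define M where "M = Max (Qb k blk q ` {..<b})"
  obtain v where v: "v < b" "Qb k blk q v = M"
  proof -
    have "M \<in> Qb k blk q ` {..<b}" unfolding M_def using b0 by (intro Max_in) auto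
    then show ?thesis using that by auto
  qed
  have low: "cond_loss k (L01b blk) g q \<ge> 1 - M" for g
  proof -
    have "blk (pred k g) < b" using pred_props[OF assms(3)] assms(1) by blast
    then have "Qb k blk q (blk (pred k g)) \<le> M" unfolding M_def by auto
    then show ?thesis unfolding cond_loss_formula[OF assms(2,3)] by simp
  qed
  have "(INF g\<in>F. cond_loss k (L01b blk) g q) \<ge> 1 - M"
    using assms(4) low by (intro cINF_greatest) auto
  then have "cond_loss k (L01b blk) f q - (1 - M) \<ge> \<epsilon>"
    using assms(5) unfolding excess_loss_def by simp
  then show ?thesis using v unfolding cond_loss_formula[OF assms(2,3)] by auto
qed

lemma pair_ineq:
  fixes sv sw hv hw e :: real
  assumes "sv > 0" "sw > 0" "hw - hv \<ge> e" "e \<ge> 0"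
  shows "sv * hv\<^sup>2 + sw * hw\<^sup>2 \<ge> e\<^sup>2 * (sv * sw / (sv + sw))"
proof -
  have "(sv+sw) * (sv * hv\<^sup>2 + sw * hw\<^sup>2) - sv * sw * (hw - hv)\<^sup>2 = (sv*hv + sw*hw)\<^sup>2"
    by (simp add: power2_eq_square algebra_simps)
  then have 1: "(sv+sw) * (sv * hv\<^sup>2 + sw * hw\<^sup>2) \<ge> sv * sw * (hw - hv)\<^sup>2"
    by (smt (verit) zero_le_power2)
  have "e\<^sup>2 \<le> (hw - hv)\<^sup>2" using assms(3,4) by (simp add: power_mono)
  then have "sv * sw * e\<^sup>2 \<le> sv * sw * (hw - hv)\<^sup>2" using assms by simp
  with 1 have "sv * sw * e\<^sup>2 \<le> (sv+sw) * (sv * hv\<^sup>2 + sw * hw\<^sup>2)" by linarith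
  then show ?thesis using assms(1,2) by (simp add: field_simps)
qed


lemma sum_block:
  "(\<Sum>i<k. if blk i = v then A else 0) = real (block_size k blk v) * (A::real)"
proof -
  have "(\<Sum>i<k. if blk i = v then A else 0) = sum (\<lambda>_. A) {i\<in>{..<k}. blk i = v}"
    by (subst sum.inter_filter) auto
  also have "\<dots> = sum (\<lambda>_. A) {i. i < k \<and> blk i = v}"
    by (rule arg_cong[where f="sum (\<lambda>_. A)"]) auto
  finally show ?thesis by (simp add: block_size_def)
qed

lemma k_sum:
  assumes "\<forall>i<k. blk i < b"
  shows "real k = (\<Sum>v<b. real (block_size k blk v))"
proof -
  have "real k = (\<Sum>i<k. (1::real))" by simp
  also have "\<dots> = (\<Sum>v<b. \<Sum>i\<in>{x. x \<in> {..<k} \<and> blk x = v}. (1::real))"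
    by (rule sum.group[symmetric]) (use assms in auto)
  also have "\<dots> = (\<Sum>v<b. real (block_size k blk v))"
  proof (rule sum.cong[OF refl])
    fix v
    have "{x. x \<in> {..<k} \<and> blk x = v} = {i. i < k \<and> blk i = v}" by auto
    then show "(\<Sum>i\<in>{x. x \<in> {..<k} \<and> blk x = v}. (1::real)) = real (block_size k blk v)"
      by (simp add: block_size_def)
  qed
  finally show ?thesis .
qed

lemma cond_loss_nonneg:
  assumes "q \<in> simplex k"
  shows "cond_loss k (L01b blk) g q \<ge> 0"
  using assms unfolding cond_loss_def simplex_def L01b_def by (auto intro!: sum_nonneg)


theorem proposition14:
  fixes k b :: nat and blk :: "nat \<Rightarrow> nat" and \<epsilon> :: real
  assumes "b \<ge> 2"
    and "\<forall>i<k. blk i < b"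
    and "\<forall>v<b. \<exists>i<k. blk i = v"
    and "0 \<le> \<epsilon>" and "\<epsilon> \<le> 1"
  shows "calib k (Phi_quad k (L01b blk)) (L01b blk) (col_span k (L01b blk)) \<epsilon>
           = ereal (\<epsilon>\<^sup>2 / (4 * real k) *
               Min {2 * real (block_size k blk v) * real (block_size k blk u)
                      / (real (block_size k blk v) + real (block_size k blk u)) | v u. v < b \<and> u < b \<and> v \<noteq> u})
    \<and> ((\<forall>v<b. \<forall>u<b. block_size k blk v = block_size k blk u) \<longrightarrow>
         calib k (Phi_quad k (L01b blk)) (L01b blk) (col_span k (L01b blk)) \<epsilon> = ereal (\<epsilon>\<^sup>2 / (4 * real b)))"
proof -
  note A = assms(1-3)
  define L where "L = L01b blk"
  define F where "F = col_span k L"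
  define Phi where "Phi = Phi_quad k L"
  define s where "s u = real (block_size k blk u)" for u
  define pv where "pv v u = 2 * s v * s u / (s v + s u)" for v u
  define PS where "PS = {2 * real (block_size k blk v) * real (block_size k blk u)
                      / (real (block_size k blk v) + real (block_size k blk u)) | v u. v < b \<and> u < b \<and> v \<noteq> u}"
  have PS_eq: "PS = (\<lambda>(v,u). pv v u) ` {(v,u). v < b \<and> u < b \<and> v \<noteq> u}"
    unfolding PS_def pv_def s_def by auto
  have finPS: "finite PS" unfolding PS_eq
    by (rule finite_imageI, rule finite_subset[of _ "{..<b} \<times> {..<b}"]) auto
  have "(0::nat,1::nat) \<in> {(v,u). v < b \<and> u < b \<and> v \<noteq> u}" using assms(1) by auto
  then have nePS: "PS \<noteq> {}" unfolding PS_eq by blast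
  have spos: "u < b \<Longrightarrow> s u > 0" for u unfolding s_def using block_size_pos[OF assms(3)] by simp
  have kpos: "k > 0" using assms(1,3) by force
  have pv_sym: "pv v u = pv u v" for v u unfolding pv_def by (simp add: algebra_simps)
  define c where "c = \<epsilon>\<^sup>2 / (4 * real k) * Min PS"
  define Feas where "Feas = {(f, q). f \<in> F \<and> q \<in> simplex k \<and> excess_loss k L F f q \<ge> \<epsilon>}"
  have calib_eq: "calib k Phi L F \<epsilon> = (INF p \<in> Feas. ereal (excess_surr k Phi F (fst p) (snd p)))"
    unfolding calib_def Feas_def ..
  have esf: "excess_surr k Phi F f q = (1/(2*real k)) * (\<Sum>i<k. (f i + 1 - Qb k blk q (blk i))\<^sup>2)"
    if "q \<in> simplex k" for f q
    unfolding Phi_def F_def L_def by (rule excess_surr_formula[OF A that])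
  have Fne: "F \<noteq> {}" unfolding F_def L_def using col_span_block[OF A, of "\<lambda>_. 0"] by blast
  have lower: "ereal c \<le> ereal (excess_surr k Phi F f q)" if fq: "(f, q) \<in> Feas" for f q
  proof -
    from fq have fF: "f \<in> F" and qS: "q \<in> simplex k" and el: "excess_loss k L F f q \<ge> \<epsilon>"
      unfolding Feas_def by auto
    define p where "p = pred k f"
    have p: "p < k" "\<forall>c'<k. f c' \<le> f p" using pred_props[OF kpos] unfolding p_def by auto
    define w where "w = blk p"
    have wb: "w < b" using p assms(2) unfolding w_def by auto
    obtain v where v: "v < b" "Qb k blk q v - Qb k blk q w \<ge> \<epsilon>"
      using excess_loss_lower[OF assms(2) qS kpos Fne el[unfolded L_def]] unfolding w_def p_def by auto
    define S where "S = (\<Sum>i<k. (f i + 1 - Qb k blk q (blk i))\<^sup>2)"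
    have Snn: "S \<ge> 0" unfolding S_def by (auto intro!: sum_nonneg)
    have es: "excess_surr k Phi F f q = S / (2 * real k)" using esf[OF qS] unfolding S_def by simp
    show ?thesis
    proof (cases "v = w")
      case True
      then have "\<epsilon> = 0" using v assms(4) by simp
      then show ?thesis using es Snn unfolding c_def by simp
    next
      case False
      obtain i1 where i1: "i1 < k" "blk i1 = v" using assms(3) v by auto
      define hv where "hv = f i1 + 1 - Qb k blk q v"
      define hw where "hw = f p + 1 - Qb k blk q w"
      have "f i1 \<le> f p" using p(2) i1(1) by blast
      then have hd: "hw - hv \<ge> \<epsilon>" using v(2) unfolding hv_def hw_def by linarith
      have mono: "S \<ge> (\<Sum>i<k. (if blk i = v then hv\<^sup>2 else 0) + (if blk i = w then hw\<^sup>2 else 0))"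
        unfolding S_def
      proof (rule sum_mono)
        fix i assume i: "i \<in> {..<k}"
        show "(if blk i = v then hv\<^sup>2 else 0) + (if blk i = w then hw\<^sup>2 else 0) \<le> (f i + 1 - Qb k blk q (blk i))\<^sup>2"
        proof -
          have ik: "i < k" using i by simp
          have fF': "f \<in> col_span k (L01b blk)" using fF unfolding F_def L_def .
          have e1: "blk i = v \<Longrightarrow> f i = f i1" using i1 by (intro col_span_const[OF fF' ik i1(1)]) simp
          have e2: "blk i = w \<Longrightarrow> f i = f p" unfolding w_def by (rule col_span_const[OF fF' ik p(1)])
          show ?thesis
          proof (cases "blk i = v")
            case True
            then show ?thesis using e1 False unfolding hv_def by simp
          next
            case nv: False
            show ?thesis
            proof (cases "blk i = w")
              case True
              then show ?thesis using e2 nv unfolding hw_def by simp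
            qed (use nv in simp)
          qed
        qed
      qed
      have "(\<Sum>i<k. (if blk i = v then hv\<^sup>2 else 0) + (if blk i = w then hw\<^sup>2 else 0)) = s v * hv\<^sup>2 + s w * hw\<^sup>2"
        by (simp add: sum.distrib sum_block s_def)
      with mono have S1: "S \<ge> s v * hv\<^sup>2 + s w * hw\<^sup>2" by simp
      have S2: "s v * hv\<^sup>2 + s w * hw\<^sup>2 \<ge> \<epsilon>\<^sup>2 * (s v * s w / (s v + s w))"
        by (rule pair_ineq[OF spos[OF v(1)] spos[OF wb] hd assms(4)])
      have "pv v w \<in> PS" unfolding PS_eq
        by (rule image_eqI[where x="(v,w)"]) (use v(1) wb False in auto)
      then have mn: "Min PS \<le> pv v w" using finPS by simp
      have "c \<le> \<epsilon>\<^sup>2 / (4 * real k) * pv v w" unfolding c_def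
        using mn kpos by (intro mult_left_mono) auto
      also have "\<dots> = \<epsilon>\<^sup>2 * (s v * s w / (s v + s w)) / (2 * real k)"
        unfolding pv_def by (simp add: field_simps)
      also have "\<dots> \<le> S / (2 * real k)" using S1 S2 kpos by (intro divide_right_mono) auto
      finally show ?thesis using es by simp
    qed
  qed
  obtain v0 u0 where vu0: "v0 < b" "u0 < b" "v0 \<noteq> u0" "Min PS = pv v0 u0"
  proof -
    have "Min PS \<in> PS" using finPS nePS by (rule Min_in)
    then show ?thesis using that unfolding PS_eq by auto
  qed
  define i0 where "i0 = (LEAST c. c < k \<and> (blk c = v0 \<or> blk c = u0))"
  have ex0: "\<exists>c. c < k \<and> (blk c = v0 \<or> blk c = u0)" using assms(3) vu0(1) by blast
  have i0: "i0 < k \<and> (blk i0 = v0 \<or> blk i0 = u0)" unfolding i0_def by (rule LeastI_ex[OF ex0])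
  define w where "w = blk i0"
  define v where "v = (if w = v0 then u0 else v0)"
  have vw: "v < b" "w < b" "v \<noteq> w" "(blk c = v0 \<or> blk c = u0) \<longleftrightarrow> (blk c = v \<or> blk c = w)" for c
    using i0 vu0 unfolding v_def w_def by auto
  have pvw: "pv v w = Min PS" using vu0(4) i0 pv_sym unfolding v_def w_def by auto
  obtain rv where rv: "rv < k" "blk rv = v" using assms(3) vw(1) by blast
  have rw: "i0 < k" "blk i0 = w" using i0 unfolding w_def by auto
  have rvw: "rv \<noteq> i0" using rv rw vw(3) by auto
  define a1 where "a1 = (1 + \<epsilon>) / 2"
  define a2 where "a2 = (1 - \<epsilon>) / 2"
  define q where "q c = (if c = rv then a1 else 0) + (if c = i0 then a2 else 0)" for c
  have qS: "q \<in> simplex k"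
  proof -
    have "(\<Sum>c<k. q c) = a1 + a2" unfolding q_def using rv(1) rw(1) by (simp add: sum.distrib)
    moreover have "\<forall>c<k. q c \<ge> 0" unfolding q_def a1_def a2_def using assms(4,5) by auto
    moreover have "a1 + a2 = 1" unfolding a1_def a2_def by (simp add: field_simps)
    ultimately show ?thesis unfolding simplex_def by auto
  qed
  have Qb: "Qb k blk q u = (if u = v then a1 else 0) + (if u = w then a2 else 0)" for u
  proof -
    have "Qb k blk q u = (\<Sum>c<k. (if c = rv then (if blk rv = u then a1 else 0) else 0) + (if c = i0 then (if blk i0 = u then a2 else 0) else 0))"
      unfolding Qb_def q_def by (rule sum.cong) auto
    also have "\<dots> = (if blk rv = u then a1 else 0) + (if blk i0 = u then a2 else 0)"
      using rv(1) rw(1) by (simp add: sum.distrib)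
    finally show ?thesis using rv(2) rw(2) by auto
  qed
  define T where "T = s v + s w"
  have sv: "s v > 0" and sw: "s w > 0" using spos vw(1,2) by auto
  have Tpos: "T > 0" using sv sw unfolding T_def by simp
  define m where "m = (\<epsilon> - 1) / 2 - \<epsilon> * s w / T"
  have mgt: "m > -1"
  proof -
    have t1: "s w / T < 1" using sv sw unfolding T_def by (simp add: field_simps)
    have t0: "s w / T > 0" using sw Tpos by simp
    have "\<epsilon> * (s w / T) < (1 + \<epsilon>) / 2"
    proof (cases "\<epsilon> = 0")
      case False
      then have "\<epsilon> > 0" using assms(4) by simp
      then have "\<epsilon> * (s w / T) < \<epsilon> * 1" using t1 by (intro mult_strict_left_mono) auto
      then have x1: "\<epsilon> * (s w / T) < \<epsilon>" by simp
      have x2: "\<epsilon> \<le> (1 + \<epsilon>) / 2" using assms(5) by simp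
      show ?thesis using x1 x2 by (rule less_le_trans)
    qed simp
    moreover have aux: "\<And>X::real. X < (1+\<epsilon>)/2 \<Longrightarrow> -1 < (\<epsilon>-1)/2 - X" by (simp add: field_simps)
    ultimately show ?thesis unfolding m_def by simp
  qed
  define G where "G u = (if u = v \<or> u = w then m else -1)" for u
  define f where "f = (\<lambda>i. if i < k then G (blk i) else 0)"
  have fF: "f \<in> F" unfolding f_def F_def L_def by (rule col_span_block[OF A])
  have predf: "pred k f = i0"
  proof -
    have "(\<lambda>c. c < k \<and> (\<forall>c'<k. f c' \<le> f c)) = (\<lambda>c. c < k \<and> (blk c = v0 \<or> blk c = u0))"
    proof (rule ext)
      fix c
      show "(c < k \<and> (\<forall>c'<k. f c' \<le> f c)) = (c < k \<and> (blk c = v0 \<or> blk c = u0))"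
      proof
        assume h: "c < k \<and> (\<forall>c'<k. f c' \<le> f c)"
        then have "f i0 \<le> f c" using rw(1) by blast
        then have "m \<le> G (blk c)" using h rw unfolding f_def G_def by simp
        then have "blk c = v \<or> blk c = w" using mgt unfolding G_def by (auto split: if_splits)
        then show "c < k \<and> (blk c = v0 \<or> blk c = u0)" using h vw(4) by blast
      next
        assume h: "c < k \<and> (blk c = v0 \<or> blk c = u0)"
        then have "f c = m" unfolding f_def G_def using vw(4) by auto
        moreover have "f c' \<le> m" if "c' < k" for c' using that mgt unfolding f_def G_def by auto
        ultimately show "c < k \<and> (\<forall>c'<k. f c' \<le> f c)" using h by auto
      qed
    qed
    then show ?thesis unfolding pred_def i0_def by simp
  qed
  define gv where "gv = (\<lambda>i. if i < k then (\<lambda>u. if u = v then 1 else 0) (blk i) else (0::real))"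
  have gvF: "gv \<in> F" unfolding gv_def F_def L_def by (rule col_span_block[OF A])
  have predgv: "blk (pred k gv) = v"
  proof -
    have "pred k gv < k" "gv rv \<le> gv (pred k gv)" using pred_props[OF kpos, of gv] rv(1) by auto
    then show ?thesis using rv unfolding gv_def by (auto split: if_splits)
  qed
  have lossf: "cond_loss k L f q = 1 - a2"
    unfolding L_def cond_loss_formula[OF qS kpos] predf Qb rw(2) using vw(3) by simp
  have lossgv: "cond_loss k L gv q = 1 - a1"
    unfolding L_def cond_loss_formula[OF qS kpos] predgv Qb using vw(3) by simp
  have "(INF g\<in>F. cond_loss k L g q) \<le> cond_loss k L gv q"
    using gvF cond_loss_nonneg[OF qS] unfolding L_def
    by (intro cINF_lower) (auto simp: bdd_below_def)
  then have elf: "excess_loss k L F f q \<ge> \<epsilon>"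
  proof -
    have "a1 - a2 = \<epsilon>" unfolding a1_def a2_def by (simp add: field_simps)
    then show ?thesis unfolding excess_loss_def lossf using lossgv \<open>(INF g\<in>F. cond_loss k L g q) \<le> cond_loss k L gv q\<close> by linarith
  qed
  have feas: "(f, q) \<in> Feas" unfolding Feas_def using fF qS elf by simp
  define hv where "hv = m + 1 - a1"
  define hw where "hw = m + 1 - a2"
  have "(\<Sum>i<k. (f i + 1 - Qb k blk q (blk i))\<^sup>2)
      = (\<Sum>i<k. (if blk i = v then hv\<^sup>2 else 0) + (if blk i = w then hw\<^sup>2 else 0))"
    by (rule sum.cong) (use vw(3) in \<open>auto simp: f_def G_def Qb hv_def hw_def\<close>)
  also have "\<dots> = s v * hv\<^sup>2 + s w * hw\<^sup>2" by (simp add: sum.distrib sum_block s_def)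
  finally have sumeq: "(\<Sum>i<k. (f i + 1 - Qb k blk q (blk i))\<^sup>2) = s v * hv\<^sup>2 + s w * hw\<^sup>2" .
  have hv': "hv = - (\<epsilon> * s w / T)" unfolding hv_def m_def a1_def by (simp add: field_simps)
  have hw': "hw = \<epsilon> * s v / T" unfolding hw_def m_def a2_def T_def using Tpos[unfolded T_def]
    by (simp add: field_simps)
  have "s v * hv\<^sup>2 + s w * hw\<^sup>2 = \<epsilon>\<^sup>2 * (s v * s w * (s w + s v)) / T\<^sup>2"
    unfolding hv' hw' by (simp add: power2_eq_square add_divide_distrib algebra_simps)
  also have "\<dots> = \<epsilon>\<^sup>2 * (s v * s w) / T"
  proof -
    have "s w + s v = T" by (simp add: T_def)
    then show ?thesis using Tpos by (simp add: power2_eq_square)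
  qed
  finally have "s v * hv\<^sup>2 + s w * hw\<^sup>2 = \<epsilon>\<^sup>2 * (s v * s w) / T" .
  then have sq: "s v * hv\<^sup>2 + s w * hw\<^sup>2 = \<epsilon>\<^sup>2 * (s v * s w) / T" .
  have MinPS: "Min PS = 2 * s v * s w / T" using pvw unfolding pv_def T_def by simp
  have esw: "excess_surr k Phi F f q = c"
    unfolding esf[OF qS] sumeq c_def MinPS sq using kpos Tpos by (simp add: field_simps)
  have main: "calib k Phi L F \<epsilon> = ereal c"
  proof (rule antisym)
    show "calib k Phi L F \<epsilon> \<le> ereal c"
      unfolding calib_eq using feas esw by (intro INF_lower2[of "(f,q)"]) auto
    show "ereal c \<le> calib k Phi L F \<epsilon>"
      unfolding calib_eq
    proof (rule INF_greatest)
      fix p assume "p \<in> Feas"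
      then show "ereal c \<le> ereal (excess_surr k Phi F (fst p) (snd p))"
        using lower[of "fst p" "snd p"] by simp
    qed
  qed
  have part2: "calib k Phi L F \<epsilon> = ereal (\<epsilon>\<^sup>2 / (4 * real b))"
    if eq: "\<forall>v<b. \<forall>u<b. block_size k blk v = block_size k blk u"
  proof -
    have b0: "0 < b" using assms(1) by simp
    have s0: "s u = s 0" if "u < b" for u
    proof -
      have "block_size k blk u = block_size k blk 0" using eq that b0 by blast
      then show ?thesis unfolding s_def by simp
    qed
    define x where "x = s 0"
    have xp: "x > 0" using spos b0 unfolding x_def by simp
    have "Min PS = x"
    proof -
      have "pv v0 u0 = 2 * x * x / (x + x)" unfolding pv_def x_def s0[OF vu0(1)] s0[OF vu0(2)] ..
      also have "\<dots> = x" using xp by (simp add: field_simps)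
      finally show ?thesis using vu0(4) by simp
    qed
    moreover have "real k = real b * x"
    proof -
      have "real k = (\<Sum>v<b. s v)" using k_sum[OF assms(2)] unfolding s_def .
      also have "\<dots> = (\<Sum>v<b. x)" unfolding x_def by (rule sum.cong[OF refl]) (rule s0, simp)
      finally show ?thesis by simp
    qed
    ultimately have "c = \<epsilon>\<^sup>2 / (4 * (real b * x)) * x" unfolding c_def by simp
    also have "\<dots> = \<epsilon>\<^sup>2 / (4 * real b)" using xp by simp
    finally show ?thesis using main by simp
  qed
  from main have m2: "calib k (Phi_quad k (L01b blk)) (L01b blk) (col_span k (L01b blk)) \<epsilon>
           = ereal (\<epsilon>\<^sup>2 / (4 * real k) *
               Min {2 * real (block_size k blk v) * real (block_size k blk u)
                      / (real (block_size k blk v) + real (block_size k blk u)) | v u. v < b \<and> u < b \<and> v \<noteq> u})"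
    unfolding Phi_def L_def F_def c_def PS_def .
  have p2: "(\<forall>v<b. \<forall>u<b. block_size k blk v = block_size k blk u) \<longrightarrow>
         calib k (Phi_quad k (L01b blk)) (L01b blk) (col_span k (L01b blk)) \<epsilon> = ereal (\<epsilon>\<^sup>2 / (4 * real b))"
    using part2 unfolding Phi_def L_def F_def by blast
  show ?thesis using m2 p2 by blast
qed

end
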